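(* On each chart of $\mathbb O'P^2$ with coordinates $(u,v)$ (satisfying $1+|u|^2+|v|^2>0$), the symmetric bilinear form whose quadratic form on tangent vectors $(du,dv)=(\xi,\eta)\in\mathbb O'^2$ is $$ds^2=\frac{|\xi|^2(1+|v|^2)+|\eta|^2(1+|u|^2)-2\mathrm{Re}\big[(u\bar v)(\eta\bar\xi)\big]}{(1+|u|^2+|v|^2)^2}$$ is non-degenerate of signature $(8,8)$ at every point.
   Context: Para-octonions $\mathbb O'=\mathbb H\oplus\mathbb H$ with product $(q_1,q_2)(p_1,p_2)=(q_1p_1+\bar p_2q_2,\ p_2q_1+q_2\bar p_1)$, conjugation $\overline{(q_1,q_2)}=(\bar q_1,-q_2)$, $\langle a,b\rangle=\mathrm{Re}(a\bar b)$, $|a|^2=\langle a,a\rangle$ (a form of signature $(4,4)$). $\mathbb O'P^2=\mathcal U/_\sim$ where $\mathcal U=\{(1,y,z):1+|y|^2+|z|^2>0\}\cup\{(x,1,z):|x|^2+1+|z|^2>0\}\cup\{(x,y,1):|x|^2+|y|^2+1>0\}$ and $[a,b,c]\sim[d,e,f]$ iff $(a,b,c)=(d\lambda,e\lambda,f\lambda)$ for some $\lambda$ with $|\lambda|^2>0$; charts $[1,u,v]\mapsto(u,v)$, $[u,1,v]\mapsto(u,v)$, $[u,v,1]\mapsto(u,v)$. *)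

theory Defs
  imports "HOL-Analysis.Analysis" "HOL-Library.Numeral_Type"
begin

datatype quat = Quat (qre: real) (qi: real) (qj: real) (qk: real)

definition qadd :: "quat \<Rightarrow> quat \<Rightarrow> quat" where
  "qadd p q = Quat (qre p + qre q) (qi p + qi q) (qj p + qj q) (qk p + qk q)"

definition qneg :: "quat \<Rightarrow> quat" where
  "qneg q = Quat (- qre q) (- qi q) (- qj q) (- qk q)"

definition qmult :: "quat \<Rightarrow> quat \<Rightarrow> quat" where
  "qmult p q = Quat
     (qre p * qre q - qi p * qi q - qj p * qj q - qk p * qk q)
     (qre p * qi q + qi p * qre q + qj p * qk q - qk p * qj q)
     (qre p * qj q - qi p * qk q + qj p * qre q + qk p * qi q)
     (qre p * qk q + qi p * qj q - qj p * qi q + qk p * qre q)"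

definition qcnj :: "quat \<Rightarrow> quat" where
  "qcnj q = Quat (qre q) (- qi q) (- qj q) (- qk q)"

type_synonym poct = "quat \<times> quat"

definition pmult :: "poct \<Rightarrow> poct \<Rightarrow> poct" where
  "pmult a b = (case a of (q1, q2) \<Rightarrow> case b of (p1, p2) \<Rightarrow>
     (qadd (qmult q1 p1) (qmult (qcnj p2) q2), qadd (qmult p2 q1) (qmult q2 (qcnj p1))))"

definition pcnj :: "poct \<Rightarrow> poct" where
  "pcnj a = (qcnj (fst a), qneg (snd a))"

definition pRe :: "poct \<Rightarrow> real" where
  "pRe a = qre (fst a)"

text \<open>\<langle>a,b\<rangle> = Re(a conj b), |a|^2 = \<langle>a,a\<rangle> (signature (4,4)).\<close>
definition pinner :: "poct \<Rightarrow> poct \<Rightarrow> real" where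
  "pinner a b = pRe (pmult a (pcnj b))"

definition pnorm2 :: "poct \<Rightarrow> real" where
  "pnorm2 a = pinner a a"

definition ds2 :: "poct \<Rightarrow> poct \<Rightarrow> poct \<Rightarrow> poct \<Rightarrow> real" where
  "ds2 u v xi eta =
     (pnorm2 xi * (1 + pnorm2 v) + pnorm2 eta * (1 + pnorm2 u)
      - 2 * pRe (pmult (pmult u (pcnj v)) (pmult eta (pcnj xi))))
     / (1 + pnorm2 u + pnorm2 v)^2"

definition tan_xi :: "real^16 \<Rightarrow> poct" where
  "tan_xi w = (Quat (w$0) (w$1) (w$2) (w$3), Quat (w$4) (w$5) (w$6) (w$7))"

definition tan_eta :: "real^16 \<Rightarrow> poct" where
  "tan_eta w = (Quat (w$8) (w$9) (w$10) (w$11), Quat (w$12) (w$13) (w$14) (w$15))"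

definition metric_form :: "poct \<Rightarrow> poct \<Rightarrow> real^16 \<Rightarrow> real^16 \<Rightarrow> real" where
  "metric_form u v X Y =
     (ds2 u v (tan_xi (X + Y)) (tan_eta (X + Y))
      - ds2 u v (tan_xi X) (tan_eta X) - ds2 u v (tan_xi Y) (tan_eta Y)) / 2"

definition pos_index :: "('a::euclidean_space \<Rightarrow> 'a \<Rightarrow> real) \<Rightarrow> nat" where
  "pos_index B = Max {dim S | S. subspace S \<and> (\<forall>x\<in>S. x \<noteq> 0 \<longrightarrow> B x x > 0)}"

definition neg_index :: "('a::euclidean_space \<Rightarrow> 'a \<Rightarrow> real) \<Rightarrow> nat" where
  "neg_index B = Max {dim S | S. subspace S \<and> (\<forall>x\<in>S. x \<noteq> 0 \<longrightarrow> B x x < 0)}"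

definition nondegenerate :: "('a::euclidean_space \<Rightarrow> 'a \<Rightarrow> real) \<Rightarrow> bool" where
  "nondegenerate B \<longleftrightarrow> (\<forall>x. (\<forall>y. B x y = 0) \<longrightarrow> x = 0)"

definition has_signature :: "('a::euclidean_space \<Rightarrow> 'a \<Rightarrow> real) \<Rightarrow> nat \<Rightarrow> nat \<Rightarrow> bool" where
  "has_signature B p q \<longleftrightarrow> pos_index B = p \<and> neg_index B = q"

end

theory Submission
  imports Defs
begin


definition padd :: "poct \<Rightarrow> poct \<Rightarrow> poct" where
  "padd x y = (qadd (fst x) (fst y), qadd (snd x) (snd y))"
definition psc :: "real \<Rightarrow> poct \<Rightarrow> poct" where
  "psc c x = (Quat (c * qre (fst x)) (c * qi (fst x)) (c * qj (fst x)) (c * qk (fst x)),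
              Quat (c * qre (snd x)) (c * qi (snd x)) (c * qj (snd x)) (c * qk (snd x)))"
definition TT :: "poct \<Rightarrow> poct \<Rightarrow> poct \<Rightarrow> real" where
  "TT a e x = pRe (pmult a (pmult e (pcnj x)))"

lemmas pdefs = padd_def psc_def pmult_def pcnj_def pRe_def pinner_def pnorm2_def
  qadd_def qneg_def qmult_def qcnj_def TT_def case_prod_unfold

lemma N_add: "pnorm2 (padd x y) = pnorm2 x + pnorm2 y + 2 * pinner x y"
  by (simp add: pdefs algebra_simps)
lemma N_sc: "pnorm2 (psc c x) = c^2 * pnorm2 x"
  by (simp add: pdefs algebra_simps power2_eq_square)
lemma pinner_sym: "pinner x y = pinner y x"
  by (simp add: pdefs algebra_simps)
lemma pinner_add: "pinner x (padd y z) = pinner x y + pinner x z"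
  by (simp add: pdefs algebra_simps)
lemma pinner_sc: "pinner x (psc c y) = c * pinner x y"
  by (simp add: pdefs algebra_simps)
lemma TT_add1: "TT a (padd e1 e2) x = TT a e1 x + TT a e2 x"
  by (simp add: pdefs algebra_simps)
lemma TT_add2: "TT a e (padd x1 x2) = TT a e x1 + TT a e x2"
  by (simp add: pdefs algebra_simps)
lemma TT_sc1: "TT a (psc c e) x = c * TT a e x"
  by (simp add: pdefs algebra_simps)
lemma TT_sc2: "TT a e (psc c x) = c * TT a e x"
  by (simp add: pdefs algebra_simps)
lemma TT_inner1: "TT a e x = pinner x (pmult a e)"
  by (simp add: pdefs algebra_simps)
lemma TT_inner2: "TT a e x = pinner e (pmult (pcnj a) x)"
  by (simp add: pdefs algebra_simps)
lemma N_cnj: "pnorm2 (pcnj a) = pnorm2 a"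
  by (simp add: pdefs algebra_simps)
definition qn :: "quat \<Rightarrow> real" where
  "qn q = qre q * qre q + qi q * qi q + qj q * qj q + qk q * qk q"
definition qin :: "quat \<Rightarrow> quat \<Rightarrow> real" where
  "qin p q = qre p * qre q + qi p * qi q + qj p * qj q + qk p * qk q"
lemma N_q: "pnorm2 x = qn (fst x) - qn (snd x)"
  by (simp add: pdefs qn_def algebra_simps)
lemma qn_add: "qn (qadd x y) = qn x + qn y + 2 * qin x y"
  by (simp add: qn_def qin_def qadd_def algebra_simps)
lemma qn_mult: "qn (qmult x y) = qn x * qn y"
  by (simp add: qn_def qmult_def algebra_simps)
lemma qn_cnj: "qn (qcnj x) = qn x"
  by (simp add: qn_def qcnj_def algebra_simps)
lemma q_cross: "qin (qmult q1 p1) (qmult (qcnj p2) q2) = qin (qmult p2 q1) (qmult q2 (qcnj p1))"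
  by (simp add: qin_def qmult_def qcnj_def algebra_simps)
lemma N_mult: "pnorm2 (pmult a e) = pnorm2 a * pnorm2 e"
proof -
  obtain q1 q2 where a: "a = (q1, q2)" by fastforce
  obtain p1 p2 where e: "e = (p1, p2)" by fastforce
  show ?thesis unfolding a e N_q pmult_def by (simp add: qn_add qn_mult qn_cnj q_cross algebra_simps)
qed

lemma pinner_self: "pinner x x = pnorm2 x" by (simp add: pnorm2_def)
lemma TT_self1: "TT a e (pmult a e) = pnorm2 a * pnorm2 e"
  by (simp add: TT_inner1 pinner_self N_mult)
lemma TT_self2: "TT a (pmult (pcnj a) x) x = pnorm2 a * pnorm2 x"
  by (simp add: TT_inner2 pinner_self N_mult N_cnj)

lemma case1:
  assumes "al \<noteq> 0"
  shows "al * pnorm2 (padd x (psc (1/al) (pmult a e))) + be * pnorm2 e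
     - 2 * TT a e (padd x (psc (1/al) (pmult a e))) = al * pnorm2 x + (be - pnorm2 a / al) * pnorm2 e"
proof -
  have "al * pnorm2 (padd x (psc (1/al) (pmult a e))) + be * pnorm2 e
     - 2 * TT a e (padd x (psc (1/al) (pmult a e)))
     = al * (pnorm2 x + (1/al)^2 * (pnorm2 a * pnorm2 e) + 2 * ((1/al) * pinner x (pmult a e)))
       + be * pnorm2 e - 2 * (pinner x (pmult a e) + (1/al) * (pnorm2 a * pnorm2 e))"
    unfolding TT_add2 TT_sc2 TT_self1 N_add N_sc pinner_sc N_mult by (simp add: TT_inner1)
  also have "\<dots> = al * pnorm2 x + (be - pnorm2 a / al) * pnorm2 e"
    using assms by (simp add: field_simps power2_eq_square)
  finally show ?thesis .
qed

lemma case2: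
  assumes "be \<noteq> 0"
  shows "al * pnorm2 x + be * pnorm2 (padd e (psc (1/be) (pmult (pcnj a) x)))
     - 2 * TT a (padd e (psc (1/be) (pmult (pcnj a) x))) x = be * pnorm2 e + (al - pnorm2 a / be) * pnorm2 x"
proof -
  have "al * pnorm2 x + be * pnorm2 (padd e (psc (1/be) (pmult (pcnj a) x)))
     - 2 * TT a (padd e (psc (1/be) (pmult (pcnj a) x))) x
     = al * pnorm2 x + be * (pnorm2 e + (1/be)^2 * (pnorm2 a * pnorm2 x) + 2 * ((1/be) * pinner e (pmult (pcnj a) x)))
       - 2 * (pinner e (pmult (pcnj a) x) + (1/be) * (pnorm2 a * pnorm2 x))"
    unfolding TT_add1 TT_sc1 TT_self2 N_add N_sc pinner_sc N_mult N_cnj by (simp add: TT_inner2)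
  also have "\<dots> = be * pnorm2 e + (al - pnorm2 a / be) * pnorm2 x"
    using assms by (simp add: field_simps power2_eq_square)
  finally show ?thesis .
qed


definition pzero :: poct where "pzero = (Quat 0 0 0 0, Quat 0 0 0 0)"

definition embx :: "poct \<Rightarrow> real^16" where
  "embx p = (\<chi> i. if i = 0 then qre (fst p) else if i = 1 then qi (fst p)
     else if i = 2 then qj (fst p) else if i = 3 then qk (fst p)
     else if i = 4 then qre (snd p) else if i = 5 then qi (snd p)
     else if i = 6 then qj (snd p) else if i = 7 then qk (snd p) else 0)"

definition embe :: "poct \<Rightarrow> real^16" where
  "embe p = (\<chi> i. if i = 8 then qre (fst p) else if i = 9 then qi (fst p)
     else if i = 10 then qj (fst p) else if i = 11 then qk (fst p)
     else if i = 12 then qre (snd p) else if i = 13 then qi (snd p)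
     else if i = 14 then qj (snd p) else if i = 15 then qk (snd p) else 0)"

lemma xi_embx: "tan_xi (embx p) = p" by (simp add: tan_xi_def embx_def)
lemma eta_embx: "tan_eta (embx p) = pzero" by (simp add: tan_eta_def embx_def pzero_def)
lemma xi_embe: "tan_xi (embe p) = pzero" by (simp add: tan_xi_def embe_def pzero_def)
lemma eta_embe: "tan_eta (embe p) = p" by (simp add: tan_eta_def embe_def)
lemma padd_zero: "padd x pzero = x" by (simp add: padd_def pzero_def qadd_def)
lemma xi_add: "tan_xi (z + w) = padd (tan_xi z) (tan_xi w)" by (simp add: tan_xi_def padd_def qadd_def)
lemma eta_add: "tan_eta (z + w) = padd (tan_eta z) (tan_eta w)" by (simp add: tan_eta_def padd_def qadd_def)
lemma xi_sc: "tan_xi (c *\<^sub>R z) = psc c (tan_xi z)" by (simp add: tan_xi_def psc_def)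
lemma eta_sc: "tan_eta (c *\<^sub>R z) = psc c (tan_eta z)" by (simp add: tan_eta_def psc_def)
lemma embx_add: "embx (padd p q) = embx p + embx q" by (simp add: vec_eq_iff embx_def padd_def qadd_def)
lemma embe_add: "embe (padd p q) = embe p + embe q" by (simp add: vec_eq_iff embe_def padd_def qadd_def)
lemma embx_sc: "embx (psc c p) = c *\<^sub>R embx p" by (simp add: vec_eq_iff embx_def psc_def)
lemma embe_sc: "embe (psc c p) = c *\<^sub>R embe p" by (simp add: vec_eq_iff embe_def psc_def)
lemma pmult_add: "pmult a (padd p q) = padd (pmult a p) (pmult a q)"
  by (simp add: pdefs algebra_simps)
lemma pmult_sc: "pmult a (psc c p) = psc c (pmult a p)"
  by (simp add: pdefs algebra_simps)
lemma psc_add: "psc k (padd p q) = padd (psc k p) (psc k q)"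
  by (simp add: pdefs algebra_simps)
lemma psc_sc: "psc k (psc c p) = psc c (psc k p)"
  by (simp add: pdefs algebra_simps)

lemma lin_f1: "linear (\<lambda>z. z + embx (psc k (pmult a (tan_eta z))))"
  by (rule linearI) (simp_all add: eta_add eta_sc pmult_add pmult_sc psc_add psc_sc embx_add embx_sc algebra_simps)
lemma lin_f2: "linear (\<lambda>z. z + embe (psc k (pmult a (tan_xi z))))"
  by (rule linearI) (simp_all add: xi_add xi_sc pmult_add pmult_sc psc_add psc_sc embe_add embe_sc algebra_simps)
lemma inj_f1: "inj (\<lambda>z. z + embx (psc k (pmult a (tan_eta z))))"
proof (rule injI)
  fix z w assume h: "z + embx (psc k (pmult a (tan_eta z))) = w + embx (psc k (pmult a (tan_eta w)))"
  then have "tan_eta z = tan_eta w"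
    by (metis eta_add eta_embx padd_zero)
  then show "z = w" using h by simp
qed
lemma inj_f2: "inj (\<lambda>z. z + embe (psc k (pmult a (tan_xi z))))"
proof (rule injI)
  fix z w assume h: "z + embe (psc k (pmult a (tan_xi z))) = w + embe (psc k (pmult a (tan_xi w)))"
  then have "tan_xi z = tan_xi w"
    by (metis xi_add xi_embe padd_zero)
  then show "z = w" using h by simp
qed


lemma ds2_TT: "ds2 u v x e = (pnorm2 x * (1 + pnorm2 v) + pnorm2 e * (1 + pnorm2 u)
   - 2 * TT (pmult u (pcnj v)) e x) / (1 + pnorm2 u + pnorm2 v)^2"
  by (simp add: ds2_def TT_def)

lemma N_uv: "pnorm2 (pmult u (pcnj v)) = pnorm2 u * pnorm2 v"
  by (simp add: N_mult N_cnj)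

lemma exists_f:
  assumes D: "1 + pnorm2 u + pnorm2 v > 0"
  shows "\<exists>f c1 c2. linear f \<and> inj f \<and> c1 > 0 \<and> c2 > 0 \<and>
    (\<forall>z. ds2 u v (tan_xi (f z)) (tan_eta (f z)) = c1 * pnorm2 (tan_xi z) + c2 * pnorm2 (tan_eta z))"
proof -
  define al where "al = 1 + pnorm2 v"
  define be where "be = 1 + pnorm2 u"
  define a where "a = pmult u (pcnj v)"
  define D where "D = 1 + pnorm2 u + pnorm2 v"
  have Dpos: "D > 0" using D by (simp add: D_def)
  have ND: "al * be - pnorm2 a = D" by (simp add: al_def be_def a_def D_def N_uv algebra_simps)
  show ?thesis
  proof (cases "al > 0")
    case True
    let ?f = "\<lambda>z. z + embx (psc (1/al) (pmult a (tan_eta z)))"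
    have "ds2 u v (tan_xi (?f z)) (tan_eta (?f z)) = (al / D^2) * pnorm2 (tan_xi z) + (1 / (al * D)) * pnorm2 (tan_eta z)" for z
    proof -
      have "ds2 u v (tan_xi (?f z)) (tan_eta (?f z))
         = (al * pnorm2 (padd (tan_xi z) (psc (1/al) (pmult a (tan_eta z)))) + be * pnorm2 (tan_eta z)
            - 2 * TT a (tan_eta z) (padd (tan_xi z) (psc (1/al) (pmult a (tan_eta z))))) / D^2"
        by (simp add: ds2_TT xi_add eta_add xi_embx eta_embx padd_zero al_def be_def a_def D_def algebra_simps)
      also have "\<dots> = (al * pnorm2 (tan_xi z) + (be - pnorm2 a / al) * pnorm2 (tan_eta z)) / D^2"
        using case1[of al] True by simp
      also have "\<dots> = (al / D^2) * pnorm2 (tan_xi z) + (1 / (al * D)) * pnorm2 (tan_eta z)"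
        using True Dpos ND by (simp add: field_simps power2_eq_square)
      finally show ?thesis .
    qed
    moreover have "al / D^2 > 0" "1 / (al * D) > 0" using True Dpos by simp_all
    ultimately show ?thesis using lin_f1 inj_f1 by blast
  next
    case False
    then have bepos: "be > 0" using D by (simp add: al_def be_def)
    let ?f = "\<lambda>z. z + embe (psc (1/be) (pmult (pcnj a) (tan_xi z)))"
    have "ds2 u v (tan_xi (?f z)) (tan_eta (?f z)) = (1 / (be * D)) * pnorm2 (tan_xi z) + (be / D^2) * pnorm2 (tan_eta z)" for z
    proof -
      have "ds2 u v (tan_xi (?f z)) (tan_eta (?f z))
         = (al * pnorm2 (tan_xi z) + be * pnorm2 (padd (tan_eta z) (psc (1/be) (pmult (pcnj a) (tan_xi z))))
            - 2 * TT a (padd (tan_eta z) (psc (1/be) (pmult (pcnj a) (tan_xi z)))) (tan_xi z)) / D^2"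
        by (simp add: ds2_TT xi_add eta_add xi_embe eta_embe padd_zero al_def be_def a_def D_def algebra_simps)
      also have "\<dots> = (be * pnorm2 (tan_eta z) + (al - pnorm2 a / be) * pnorm2 (tan_xi z)) / D^2"
        using case2[of be] bepos by simp
      also have "\<dots> = (1 / (be * D)) * pnorm2 (tan_xi z) + (be / D^2) * pnorm2 (tan_eta z)"
        using bepos Dpos ND by (simp add: field_simps power2_eq_square)
      finally show ?thesis .
    qed
    moreover have "be / D^2 > 0" "1 / (be * D) > 0" using bepos Dpos by simp_all
    ultimately show ?thesis using lin_f2 inj_f2 by blast
  qed
qed


lemma pos_part:
  assumes z: "z \<in> {z::real^16. \<forall>i. i \<notin> {0,1,2,3,8,9,10,11} \<longrightarrow> z$i = 0}" and nz: "z \<noteq> 0"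
    and c: "c1 > 0" "c2 > 0"
  shows "c1 * pnorm2 (tan_xi z) + c2 * pnorm2 (tan_eta z) > 0"
proof -
  let ?I = "{0,1,2,3,8,9,10,11::16}"
  have zz: "z$4 = 0" "z$5 = 0" "z$6 = 0" "z$7 = 0" "z$12 = 0" "z$13 = 0" "z$14 = 0" "z$15 = 0"
    using z by simp_all
  have A: "pnorm2 (tan_xi z) = z$0*z$0 + z$1*z$1 + z$2*z$2 + z$3*z$3"
    by (simp add: N_q tan_xi_def qn_def zz)
  have B: "pnorm2 (tan_eta z) = z$8*z$8 + z$9*z$9 + z$10*z$10 + z$11*z$11"
    by (simp add: N_q tan_eta_def qn_def zz)
  obtain i where i: "z$i \<noteq> 0" using nz by (auto simp: vec_eq_iff)
  then have iI: "i \<in> ?I" using z by blast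
  have S: "(\<Sum>j\<in>?I. z$j * z$j) = pnorm2 (tan_xi z) + pnorm2 (tan_eta z)"
    unfolding A B by (simp add: algebra_simps)
  have "z$i * z$i \<le> (\<Sum>j\<in>?I. z$j * z$j)"
    by (rule member_le_sum) (use iI in auto)
  moreover have "z$i * z$i > 0" using i by (auto simp: zero_less_mult_iff linorder_neq_iff)
  ultimately have pos: "pnorm2 (tan_xi z) + pnorm2 (tan_eta z) > 0" using S by linarith
  have n1: "pnorm2 (tan_xi z) \<ge> 0" unfolding A by simp
  have n2: "pnorm2 (tan_eta z) \<ge> 0" unfolding B by simp
  show ?thesis
  proof (cases "pnorm2 (tan_xi z) > 0")
    case True
    then show ?thesis using c n2 by (simp add: add_pos_nonneg)
  next
    case False
    then have "pnorm2 (tan_eta z) > 0" using pos n1 by linarith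
    then show ?thesis using c n1 by (simp add: add_nonneg_pos)
  qed
qed

lemma neg_part:
  assumes z: "z \<in> {z::real^16. \<forall>i. i \<notin> {4,5,6,7,12,13,14,15} \<longrightarrow> z$i = 0}" and nz: "z \<noteq> 0"
    and c: "c1 > 0" "c2 > 0"
  shows "c1 * pnorm2 (tan_xi z) + c2 * pnorm2 (tan_eta z) < 0"
proof -
  let ?I = "{4,5,6,7,12,13,14,15::16}"
  have zz: "z$0 = 0" "z$1 = 0" "z$2 = 0" "z$3 = 0" "z$8 = 0" "z$9 = 0" "z$10 = 0" "z$11 = 0"
    using z by simp_all
  have A: "pnorm2 (tan_xi z) = - (z$4*z$4 + z$5*z$5 + z$6*z$6 + z$7*z$7)"
    by (simp add: N_q tan_xi_def qn_def zz)
  have B: "pnorm2 (tan_eta z) = - (z$12*z$12 + z$13*z$13 + z$14*z$14 + z$15*z$15)"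
    by (simp add: N_q tan_eta_def qn_def zz)
  obtain i where i: "z$i \<noteq> 0" using nz by (auto simp: vec_eq_iff)
  then have iI: "i \<in> ?I" using z by blast
  have S: "(\<Sum>j\<in>?I. z$j * z$j) = - pnorm2 (tan_xi z) - pnorm2 (tan_eta z)"
    unfolding A B by (simp add: algebra_simps)
  have "z$i * z$i \<le> (\<Sum>j\<in>?I. z$j * z$j)"
    by (rule member_le_sum) (use iI in auto)
  moreover have "z$i * z$i > 0" using i by (auto simp: zero_less_mult_iff linorder_neq_iff)
  ultimately have pos: "pnorm2 (tan_xi z) + pnorm2 (tan_eta z) < 0" using S by linarith
  have n1: "pnorm2 (tan_xi z) \<le> 0" unfolding A neg_le_0_iff_le by simp
  have n2: "pnorm2 (tan_eta z) \<le> 0" unfolding B neg_le_0_iff_le by simp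
  show ?thesis
  proof (cases "pnorm2 (tan_xi z) < 0")
    case True
    then show ?thesis using c n2 by (simp add: add_neg_nonpos mult_pos_neg mult_nonneg_nonpos)
  next
    case False
    then have "pnorm2 (tan_eta z) < 0" using pos n1 by linarith
    then show ?thesis using c n1 by (simp add: add_nonpos_neg mult_pos_neg mult_nonneg_nonpos)
  qed
qed

lemma dim_triv: "S \<inter> T = {0::'a::euclidean_space} \<Longrightarrow> dim (S \<inter> T) = 0"
  by simp

lemma sig_abstract:
  fixes B :: "real^16 \<Rightarrow> real^16 \<Rightarrow> real" and P N :: "(real^16) set"
  assumes bil: "bilinear B" and symB: "\<forall>x y. B x y = B y x"
    and sP: "subspace P" and sN: "subspace N" and dP: "dim P = 8" and dN: "dim N = 8"
    and pos: "\<forall>x\<in>P. x \<noteq> 0 \<longrightarrow> B x x > 0"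
    and neg: "\<forall>x\<in>N. x \<noteq> 0 \<longrightarrow> B x x < 0"
  shows "pos_index B = 8 \<and> neg_index B = 8 \<and> nondegenerate B"
proof -
  have D16: "DIM(real^16) = 16" by simp
  have bound: "dim S \<le> 8" if "subspace S" "S \<inter> T = {0}" "subspace T" "dim T = 8" for S T :: "(real^16) set"
  proof -
    have "dim {x + y |x y. x \<in> S \<and> y \<in> T} + dim (S \<inter> T) = dim S + dim T"
      using dim_sums_Int that by blast
    moreover have "dim {x + y |x y. x \<in> S \<and> y \<in> T} \<le> 16" using dim_subset_UNIV[where ?'a="real^16"] by simp
    ultimately show ?thesis using that dim_triv by fastforce
  qed
  have "pos_index B = 8"
  proof -
    let ?K = "{dim S | S. subspace S \<and> (\<forall>x\<in>S. x \<noteq> 0 \<longrightarrow> B x x > 0)}"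
    have K8: "\<forall>k\<in>?K. k \<le> 8"
    proof
      fix k assume "k \<in> ?K"
      then obtain S where S: "k = dim S" "subspace S" "\<forall>x\<in>S. x \<noteq> 0 \<longrightarrow> B x x > 0" by blast
      have "S \<inter> N = {0}"
      proof
        show "S \<inter> N \<subseteq> {0}"
        proof
          fix y assume "y \<in> S \<inter> N"
          then show "y \<in> {0}" using S(3) neg by (metis IntD1 IntD2 less_asym singletonI)
        qed
      qed (use S(2) sN subspace_0 in auto)
      then show "k \<le> 8" using bound[OF S(2) _ sN dN] S(1) by simp
    qed
    have "8 \<in> ?K" using sP pos dP by force
    moreover have "finite ?K" using K8 finite_subset[of ?K "{..8}"] by auto
    ultimately show ?thesis unfolding pos_index_def using K8 by (intro Max_eqI) auto
  qed
  moreover have "neg_index B = 8"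
  proof -
    let ?K = "{dim S | S. subspace S \<and> (\<forall>x\<in>S. x \<noteq> 0 \<longrightarrow> B x x < 0)}"
    have K8: "\<forall>k\<in>?K. k \<le> 8"
    proof
      fix k assume "k \<in> ?K"
      then obtain S where S: "k = dim S" "subspace S" "\<forall>x\<in>S. x \<noteq> 0 \<longrightarrow> B x x < 0" by blast
      have "S \<inter> P = {0}"
      proof
        show "S \<inter> P \<subseteq> {0}"
        proof
          fix y assume "y \<in> S \<inter> P"
          then show "y \<in> {0}" using S(3) pos by (metis IntD1 IntD2 less_asym singletonI)
        qed
      qed (use S(2) sP subspace_0 in auto)
      then show "k \<le> 8" using bound[OF S(2) _ sP dP] S(1) by simp
    qed
    have "8 \<in> ?K" using sN neg dN by force
    moreover have "finite ?K" using K8 finite_subset[of ?K "{..8}"] by auto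
    ultimately show ?thesis unfolding neg_index_def using K8 by (intro Max_eqI) auto
  qed
  moreover have "nondegenerate B"
    unfolding nondegenerate_def
  proof (intro allI impI)
    fix x assume x0: "\<forall>y. B x y = 0"
    let ?PN = "{x + y |x y. x \<in> P \<and> y \<in> N}"
    have PN0: "P \<inter> N = {0}"
      proof
        show "P \<inter> N \<subseteq> {0}"
        proof
          fix y assume "y \<in> P \<inter> N"
          then show "y \<in> {0}" using pos neg by (metis IntD1 IntD2 less_asym singletonI)
        qed
      qed (use sP sN subspace_0 in auto)
    have "dim ?PN + dim (P \<inter> N) = 16" using dim_sums_Int[OF sP sN] dP dN by simp
    then have "dim ?PN = DIM(real^16)" using dim_triv[OF PN0] by simp
    then have spU: "span ?PN = UNIV" using dim_eq_full by blast
    have "subspace ?PN" using subspace_sums[OF sP sN] by simp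
    have h2: "span ?PN = ?PN" by (rule span_eq_iff[THEN iffD2, OF \<open>subspace ?PN\<close>])
    have "?PN = UNIV" using trans[OF h2[symmetric] spU] .
    then have "x \<in> ?PN" by simp
    then obtain p n where pn: "x = p + n" "p \<in> P" "n \<in> N" by blast
    have "B x p = B p p + B n p" using pn(1) bilinear_ladd[OF bil] by simp
    then have e1: "B p p + B n p = 0" using x0 by simp
    have "B x n = B p n + B n n" using pn(1) bilinear_ladd[OF bil] by simp
    then have e2: "B p n + B n n = 0" using x0 by simp
    have "B p p = B n n" using e1 e2 symB[rule_format, of n p] by linarith
    have "B p p \<ge> 0" using pos pn(2) by (cases "p = 0") (auto simp: bilinear_lzero[OF bil] less_imp_le)
    moreover have "B n n \<le> 0" using neg pn(3) by (cases "n = 0") (auto simp: bilinear_lzero[OF bil] less_imp_le)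
    ultimately have "B p p = 0" "B n n = 0" using \<open>B p p = B n n\<close> by linarith+
    have "p = 0"
    proof (rule ccontr)
      assume "p \<noteq> 0" then have "B p p > 0" using pos pn(2) by blast
      then show False using \<open>B p p = 0\<close> by simp
    qed
    have "n = 0"
    proof (rule ccontr)
      assume "n \<noteq> 0" then have "B n n < 0" using neg pn(3) by blast
      then show False using \<open>B n n = 0\<close> by simp
    qed
    then show "x = 0" using pn \<open>p = 0\<close> by simp
  qed
  ultimately show ?thesis by blast
qed

lemma pinner_addL: "pinner (padd y z) x = pinner y x + pinner z x"
  using pinner_add pinner_sym by metis
lemma pinner_scL: "pinner (psc c y) x = c * pinner y x"
  using pinner_sc pinner_sym by metis

lemma div_helper: "(a::real)/d - b/d - c/d = (a - b - c)/d"
  by (simp add: diff_divide_distrib)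

lemma metric_form_eq:
  "metric_form u v X Y = (pinner (tan_xi X) (tan_xi Y) * (1 + pnorm2 v) + pinner (tan_eta X) (tan_eta Y) * (1 + pnorm2 u)
     - TT (pmult u (pcnj v)) (tan_eta X) (tan_xi Y) - TT (pmult u (pcnj v)) (tan_eta Y) (tan_xi X)) / (1 + pnorm2 u + pnorm2 v)^2"
  (is "_ = ?F / ?d")
proof -
  let ?a = "pmult u (pcnj v)"
  have "metric_form u v X Y =
    ((pnorm2 (padd (tan_xi X) (tan_xi Y)) * (1 + pnorm2 v) + pnorm2 (padd (tan_eta X) (tan_eta Y)) * (1 + pnorm2 u)
       - 2 * TT ?a (padd (tan_eta X) (tan_eta Y)) (padd (tan_xi X) (tan_xi Y)))
     - (pnorm2 (tan_xi X) * (1 + pnorm2 v) + pnorm2 (tan_eta X) * (1 + pnorm2 u) - 2 * TT ?a (tan_eta X) (tan_xi X))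
     - (pnorm2 (tan_xi Y) * (1 + pnorm2 v) + pnorm2 (tan_eta Y) * (1 + pnorm2 u) - 2 * TT ?a (tan_eta Y) (tan_xi Y)))
     / ?d / 2"
    unfolding metric_form_def ds2_TT xi_add eta_add div_helper ..
  also have "\<dots> = (2 * ?F) / ?d / 2"
    unfolding N_add TT_add1 TT_add2 by (simp add: algebra_simps)
  also have "\<dots> = ?F / ?d" by (simp add: field_split_simps)
  finally show ?thesis .
qed

theorem proposition6p5:
  fixes u v :: poct
  assumes "1 + pnorm2 u + pnorm2 v > 0"
  shows "bilinear (metric_form u v)
    \<and> (\<forall>X Y. metric_form u v X Y = metric_form u v Y X)
    \<and> (\<forall>X. metric_form u v X X = ds2 u v (tan_xi X) (tan_eta X))
    \<and> nondegenerate (metric_form u v)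
    \<and> has_signature (metric_form u v) 8 8"
proof -
  let ?B = "metric_form u v"
  have bil: "bilinear ?B"
    unfolding bilinear_def
  proof (intro conjI allI)
    fix X show "linear (?B X)"
      by (rule linearI) (simp_all add: metric_form_eq xi_add eta_add xi_sc eta_sc pinner_add pinner_sc
          TT_add1 TT_add2 TT_sc1 TT_sc2 add_divide_distrib diff_divide_distrib algebra_simps)
  next
    fix Y show "linear (\<lambda>X. ?B X Y)"
      by (rule linearI) (simp_all add: metric_form_eq xi_add eta_add xi_sc eta_sc pinner_addL pinner_scL
          TT_add1 TT_add2 TT_sc1 TT_sc2 add_divide_distrib diff_divide_distrib algebra_simps)
  qed
  have symm: "\<forall>X Y. ?B X Y = ?B Y X"
  proof (intro allI)
    fix X Y
    show "?B X Y = ?B Y X"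
      unfolding metric_form_eq pinner_sym[of "tan_xi X" "tan_xi Y"] pinner_sym[of "tan_eta X" "tan_eta Y"]
      by (simp add: algebra_simps)
  qed
  have diag: "\<forall>X. ?B X X = ds2 u v (tan_xi X) (tan_eta X)"
    by (simp add: metric_form_eq ds2_TT pinner_self algebra_simps)
  obtain f c1 c2 where f: "linear f" "inj f" "c1 > 0" "c2 > 0"
    and fe: "\<And>z. ds2 u v (tan_xi (f z)) (tan_eta (f z)) = c1 * pnorm2 (tan_xi z) + c2 * pnorm2 (tan_eta z)"
    using exists_f[OF assms] by blast
  define Ep where "Ep = {z::real^16. \<forall>i. i \<notin> {0,1,2,3,8,9,10,11} \<longrightarrow> z$i = 0}"
  define En where "En = {z::real^16. \<forall>i. i \<notin> {4,5,6,7,12,13,14,15} \<longrightarrow> z$i = 0}"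
  have sEp: "subspace Ep" unfolding Ep_def subspace_def by simp
  have sEn: "subspace En" unfolding En_def subspace_def by simp
  have dEp: "dim Ep = 8"
  proof -
    have "vec.dim Ep = card {0,1,2,3,8,9,10,11::16}" unfolding Ep_def by (rule dim_substandard_cart)
    then show ?thesis by (simp add: dim_vec_eq)
  qed
  have dEn: "dim En = 8"
  proof -
    have "vec.dim En = card {4,5,6,7,12,13,14,15::16}" unfolding En_def by (rule dim_substandard_cart)
    then show ?thesis by (simp add: dim_vec_eq)
  qed
  have injs: "inj_on f (span S)" for S using f(2) by (simp add: inj_on_def inj_def)
  have f0: "f 0 = 0" using f(1) linear_0 by blast
  have "pos_index ?B = 8 \<and> neg_index ?B = 8 \<and> nondegenerate ?B"
  proof (rule sig_abstract[OF bil symm])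
    show "subspace (f ` Ep)" using linear_subspace_image[OF f(1) sEp] .
    show "subspace (f ` En)" using linear_subspace_image[OF f(1) sEn] .
    show "dim (f ` Ep) = 8" using dim_image_eq[OF f(1) injs] dEp by simp
    show "dim (f ` En) = 8" using dim_image_eq[OF f(1) injs] dEn by simp
    show "\<forall>x\<in>f ` Ep. x \<noteq> 0 \<longrightarrow> 0 < ?B x x"
    proof (intro ballI impI)
      fix x assume "x \<in> f ` Ep" "x \<noteq> 0"
      then obtain z where z: "x = f z" "z \<in> Ep" by blast
      then have "z \<noteq> 0" using \<open>x \<noteq> 0\<close> f0 by auto
      then show "0 < ?B x x" using pos_part[of z c1 c2] z f diag fe unfolding Ep_def by simp
    qed
    show "\<forall>x\<in>f ` En. x \<noteq> 0 \<longrightarrow> ?B x x < 0"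
    proof (intro ballI impI)
      fix x assume "x \<in> f ` En" "x \<noteq> 0"
      then obtain z where z: "x = f z" "z \<in> En" by blast
      then have "z \<noteq> 0" using \<open>x \<noteq> 0\<close> f0 by auto
      then show "?B x x < 0" using neg_part[of z c1 c2] z f diag fe unfolding En_def by simp
    qed
  qed
  then show ?thesis using bil symm diag unfolding has_signature_def by blast
qed

end
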